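(* Fix $\rho\in(\frac13,\frac12)$, $M>0$ and $\beta\in[-M,M]$, and a function $\chi\in C_c^\infty(\mathbb{R})$ with $0\leq\chi\leq1$, $\operatorname{supp}\chi\subset(-1,1)$ and $\chi=1$ on $[-\frac12,\frac12]$. For $h>0$ small, set $T=T_h=h^{\rho-\frac12}$, and let $X_{h,\beta}=L^2\big((0,T);(1-h^{1/2}\beta\tau)\,d\tau\big)$ with inner product $\langle u,v\rangle_{h,\beta}=\int_0^T u\bar v\,(1-h^{1/2}\beta\tau)\,d\tau$ and norm $\|u\|_{h,\beta}=\langle u,u\rangle_{h,\beta}^{1/2}$ (the weight is positive on $(0,T)$ for $h$ small). Let \[ u^{\rm app}_{h,\beta}(\tau)=\Big(1+\beta^2h\Big(\frac{\tau^2}{4}-\frac18\Big)\Big)\sqrt2\,e^{-\tau},\qquad v_h(\tau)=c_h\,\chi(T^{-1}\tau)\,u^{\rm app}_{h,\beta}(\tau), \] where $c_h>0$ is chosen so that $\|v_h\|_{h,\beta}=1$. Then there exist positive constants $m,h_0$ such that, if $h\in(0,h_0]$ and $g_h\in H^1(0,T)$ satisfies $\langle g_h,v_h\rangle_{h,\beta}=0$, then \[ \|g_h'\|_{h,\beta}^2-|g_h(0)|^2\geq m\,h^{1-2\rho}\|g_h\|_{h,\beta}^2. \] *)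

theory Defs
  imports "HOL-Analysis.Analysis"
begin

definition smooth_real :: "(real \<Rightarrow> real) \<Rightarrow> bool" where
  "smooth_real f \<longleftrightarrow> (\<exists>D :: nat \<Rightarrow> real \<Rightarrow> real. D 0 = f \<and>
       (\<forall>n x. (D n has_real_derivative D (Suc n) x) (at x)))"

definition tsupp :: "(real \<Rightarrow> real) \<Rightarrow> real set" where
  "tsupp f = closure {x. f x \<noteq> 0}"

definition Th :: "real \<Rightarrow> real \<Rightarrow> real" where
  "Th \<rho> h = h powr (\<rho> - 1/2)"

definition wt :: "real \<Rightarrow> real \<Rightarrow> real \<Rightarrow> real" where
  "wt h \<beta> \<tau> = 1 - sqrt h * \<beta> * \<tau>"

definition ip :: "real \<Rightarrow> real \<Rightarrow> real \<Rightarrow> (real \<Rightarrow> complex) \<Rightarrow> (real \<Rightarrow> complex) \<Rightarrow> complex" where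
  "ip \<rho> h \<beta> u v =
     (LINT \<tau>:{0<..<Th \<rho> h}|lborel. u \<tau> * cnj (v \<tau>) * complex_of_real (wt h \<beta> \<tau>))"

definition nrm :: "real \<Rightarrow> real \<Rightarrow> real \<Rightarrow> (real \<Rightarrow> complex) \<Rightarrow> real" where
  "nrm \<rho> h \<beta> u = sqrt (Re (ip \<rho> h \<beta> u u))"

definition uapp :: "real \<Rightarrow> real \<Rightarrow> real \<Rightarrow> real" where
  "uapp h \<beta> \<tau> = (1 + \<beta>^2 * h * (\<tau>^2 / 4 - 1/8)) * sqrt 2 * exp (- \<tau>)"

definition w0 :: "real \<Rightarrow> (real \<Rightarrow> real) \<Rightarrow> real \<Rightarrow> real \<Rightarrow> real \<Rightarrow> complex" where
  "w0 \<rho> chi h \<beta> \<tau> = complex_of_real (chi (\<tau> / Th \<rho> h) * uapp h \<beta> \<tau>)"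

definition ch :: "real \<Rightarrow> (real \<Rightarrow> real) \<Rightarrow> real \<Rightarrow> real \<Rightarrow> real" where
  "ch \<rho> chi h \<beta> = 1 / nrm \<rho> h \<beta> (w0 \<rho> chi h \<beta>)"

definition vh :: "real \<Rightarrow> (real \<Rightarrow> real) \<Rightarrow> real \<Rightarrow> real \<Rightarrow> real \<Rightarrow> complex" where
  "vh \<rho> chi h \<beta> \<tau> = complex_of_real (ch \<rho> chi h \<beta>) * w0 \<rho> chi h \<beta> \<tau>"

(* g in H^1(0,T) with weak derivative dg: dg is square integrable on (0,T)
   and g is (the continuous representative) g(t) = g(0) + int_0^t dg on [0,T]. *)
definition H1_deriv :: "real \<Rightarrow> (real \<Rightarrow> complex) \<Rightarrow> (real \<Rightarrow> complex) \<Rightarrow> bool" where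
  "H1_deriv T g dg \<longleftrightarrow>
     dg \<in> borel_measurable lborel \<and>
     set_integrable lborel {0<..<T} dg \<and>
     set_integrable lborel {0<..<T} (\<lambda>t. (cmod (dg t))^2) \<and>
     (\<forall>t\<in>{0..T}. g t = g 0 + (LINT s:{0<..<t}|lborel. dg s))"

end

theory Submission
  imports Defs
begin

lemma set_nonneg:
  fixes f :: "'a \<Rightarrow> real"
  assumes "\<And>x. x \<in> A \<Longrightarrow> 0 \<le> f x"
  shows "0 \<le> (LINT x:A|M. f x)"
  unfolding set_lebesgue_integral_def
  by (rule Bochner_Integration.integral_nonneg) (auto simp: assms split: split_indicator)

lemma set_norm_bound:
  fixes f :: "'a \<Rightarrow> 'b::{banach, second_countable_topology}"
  shows "norm (LINT x:A|M. f x) \<le> (LINT x:A|M. norm (f x))"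
  unfolding set_lebesgue_integral_def
  using integral_norm_bound[of M "\<lambda>x. indicator A x *\<^sub>R f x"]
  by (simp add: abs_mult)

lemma set_mono':
  fixes f g :: "'a \<Rightarrow> real"
  assumes "set_integrable M A g" "\<And>x. x \<in> A \<Longrightarrow> f x \<le> g x" "\<And>x. x \<in> A \<Longrightarrow> 0 \<le> g x"
  shows "(LINT x:A|M. f x) \<le> (LINT x:A|M. g x)"
  using assms unfolding set_lebesgue_integral_def set_integrable_def
  by (intro integral_mono') (auto split: split_indicator)

lemma cs_set:
  fixes f g :: "'a \<Rightarrow> real"
  assumes i1: "set_integrable M S (\<lambda>x. (f x)^2)" and i2: "set_integrable M S (\<lambda>x. (g x)^2)"
    and i3: "set_integrable M S (\<lambda>x. f x * g x)"
  shows "(LINT x:S|M. f x * g x)^2 \<le> (LINT x:S|M. (f x)^2) * (LINT x:S|M. (g x)^2)"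
proof -
  define A where "A = (LINT x:S|M. (f x)^2)"
  define B where "B = (LINT x:S|M. (g x)^2)"
  define C where "C = (LINT x:S|M. f x * g x)"
  have key: "0 \<le> A - 2*l*C + l^2*B" for l
  proof -
    have "0 \<le> (LINT x:S|M. (f x - l * g x)^2)" by (rule set_nonneg) auto
    also have "\<dots> = (LINT x:S|M. ((f x)^2 - (2*l) * (f x * g x)) + l^2 * (g x)^2)"
      by (simp add: power2_eq_square algebra_simps)
    also have "\<dots> = A - 2*l*C + l^2*B"
      using i1 i2 i3 unfolding A_def B_def C_def
      by (subst set_integral_add) (auto simp: set_integral_diff)
    finally show ?thesis .
  qed
  have "C^2 \<le> A * B"
  proof (cases "B = 0")
    case True
    have "C = 0"
    proof (rule ccontr)
      assume "C \<noteq> 0"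
      have "0 \<le> A - 2*((A+1)/(2*C))*C" using key[of "(A+1)/(2*C)"] True by simp
      then show False using \<open>C \<noteq> 0\<close> by simp
    qed
    then show ?thesis using True by simp
  next
    case False
    have B0: "B > 0" using False key[of 0] key[of "1"] 
    proof -
      have "0 \<le> B" unfolding B_def by (rule set_nonneg) auto
      then show ?thesis using False by simp
    qed
    have "0 \<le> A - 2*(C/B)*C + (C/B)^2*B" by (rule key)
    also have "\<dots> = A - C^2/B" using B0 by (simp add: power2_eq_square field_simps)
    finally show ?thesis using B0 by (simp add: field_simps)
  qed
  then show ?thesis unfolding A_def B_def C_def .
qed

lemma cont_set_integrable:
  fixes f :: "real \<Rightarrow> 'b::{banach, second_countable_topology}"
  assumes "continuous_on {a..b} f" "S \<subseteq> {a..b}" "S \<in> sets lborel"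
  shows "set_integrable lborel S f"
proof -
  have "set_integrable lborel {a..b} f"
    unfolding set_integrable_def by (rule borel_integrable_compact) (auto simp: assms)
  then show ?thesis using set_integrable_subset assms by blast
qed

lemma exp_int:
  fixes c a b :: real
  assumes "c > 0" "a \<le> b"
  shows "(LINT t:{a<..<b}|lborel. exp (-c*t)) = (exp (-c*a) - exp (-c*b))/c"
proof -
  have "(LINT t:{a<..<b}|lborel. exp (-c*t)) = (LBINT t=ereal a..ereal b. exp (-c*t))"
    using assms by (subst interval_integral_Ioo) auto
  also have "\<dots> = (- exp (-c*b)/c) - (- exp (-c*a)/c)"
  proof (rule interval_integral_FTC_finite)
    show "continuous_on {min a b..max a b} (\<lambda>t. exp (-c*t))"
      by (intro continuous_intros)
    fix x
    show "((\<lambda>t. - exp (-c*t)/c) has_vector_derivative exp (-c*x)) (at x within {min a b..max a b})"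
      using assms
      by (auto intro!: derivative_eq_intros simp: has_real_derivative_iff_has_vector_derivative[symmetric])
  qed
  finally show ?thesis by (simp add: diff_divide_distrib)
qed

lemma fin_Ioo[simp]: "emeasure lborel {a<..<b::real} < top"
  by (cases "a \<le> b") auto

lemma fubini_tri:
  fixes d :: "real \<Rightarrow> complex" and F :: "real \<Rightarrow> real" and T :: real
  assumes d_meas: "d \<in> borel_measurable lborel" and d_int: "set_integrable lborel {0<..<T} d"
    and F_cont: "continuous_on UNIV F"
  shows "set_integrable lborel {0<..<T} (\<lambda>t. (LINT s:{0<..<t}|lborel. d s) * of_real (F t))"
   and "set_integrable lborel {0<..<T} (\<lambda>s. d s * of_real (LINT t:{s<..<T}|lborel. F t))"
   and "(LINT t:{0<..<T}|lborel. (LINT s:{0<..<t}|lborel. d s) * of_real (F t)) =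
        (LINT s:{0<..<T}|lborel. d s * of_real (LINT t:{s<..<T}|lborel. F t))"
proof -
  have F_meas[measurable]: "F \<in> borel_measurable lborel"
    using borel_measurable_continuous_onI[OF F_cont] by simp
  note d_meas[measurable]
  obtain B where B: "\<And>t. t \<in> {0..T} \<Longrightarrow> \<bar>F t\<bar> \<le> B"
  proof -
    have "compact (F ` {0..T})"
      by (rule compact_continuous_image) (rule continuous_on_subset[OF F_cont], simp, rule compact_Icc)
    then have "bounded (F ` {0..T})" by (rule compact_imp_bounded)
    then obtain B where B0: "\<forall>y\<in>F ` {0..T}. norm y \<le> B" unfolding bounded_iff by (elim exE)
    show ?thesis
    proof (rule that[of B])
      fix t :: real assume "t \<in> {0..T}"
      then have "norm (F t) \<le> B" using B0 by (intro bspec[OF B0] imageI)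
      then show "\<bar>F t\<bar> \<le> B" by (simp only: real_norm_def)
    qed
  qed
  define \<Phi> where "\<Phi> s t = (if 0 < s \<and> s < T \<and> s < t \<and> t < T then d s * of_real (F t) else 0)" for s t
  define \<Psi> where "\<Psi> s t = (indicator {0<..<T} s * norm (d s)) * (indicator {0<..<T} t * B)" for s t :: real
  have Phi_meas: "(\<lambda>(s,t). \<Phi> s t) \<in> borel_measurable (lborel \<Otimes>\<^sub>M lborel)"
    unfolding \<Phi>_def by measurable
  have dn: "integrable lborel (\<lambda>s. indicator {0<..<T} s * norm (d s))"
  proof -
    have "integrable lborel (\<lambda>s. norm (indicator {0<..<T} s *\<^sub>R d s))"
      using d_int unfolding set_integrable_def by (rule integrable_norm)
    moreover have "(\<lambda>s. norm (indicator {0<..<T} s *\<^sub>R d s)) = (\<lambda>s. indicator {0<..<T} s * norm (d s))"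
      by (auto split: split_indicator)
    ultimately show ?thesis by simp
  qed
  have Psi_int: "integrable (lborel \<Otimes>\<^sub>M lborel) (\<lambda>(s,t). \<Psi> s t)"
  proof (rule lborel_pair.Fubini_integrable)
    show "(\<lambda>(s,t). \<Psi> s t) \<in> borel_measurable (lborel \<Otimes>\<^sub>M lborel)"
      unfolding \<Psi>_def by measurable
    have "(\<lambda>s. \<integral>t. norm (case (s,t) of (s,t) \<Rightarrow> \<Psi> s t) \<partial>lborel) =
          (\<lambda>s. (indicator {0<..<T} s * norm (d s)) * \<bar>B\<bar> * measure lborel {0<..<T})"
    proof
      fix s
      have "(\<lambda>t. norm (case (s,t) of (s,t) \<Rightarrow> \<Psi> s t)) = (\<lambda>t. ((indicator {0<..<T} s * norm (d s)) * \<bar>B\<bar>) * indicator {0<..<T} t)"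
        unfolding \<Psi>_def by (auto simp: abs_mult split: split_indicator)
      then show "(\<integral>t. norm (case (s,t) of (s,t) \<Rightarrow> \<Psi> s t) \<partial>lborel) = (indicator {0<..<T} s * norm (d s)) * \<bar>B\<bar> * measure lborel {0<..<T}"
        by (simp del: measure_lborel_Ioo)
    qed
    then show "integrable lborel (\<lambda>s. \<integral>t. norm (case (s,t) of (s,t) \<Rightarrow> \<Psi> s t) \<partial>lborel)"
      using dn by simp
    show "AE s in lborel. integrable lborel (\<lambda>t. case (s,t) of (s,t) \<Rightarrow> \<Psi> s t)"
    proof (rule AE_I2)
      fix s :: real
      have "integrable lborel (\<lambda>t. ((indicator {0<..<T} s * norm (d s)) * B) * indicator {0<..<T} t)"
        by (intro integrable_mult_right integrable_real_indicator) auto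
      moreover have "(\<lambda>t. case (s,t) of (s,t) \<Rightarrow> \<Psi> s t) = (\<lambda>t. ((indicator {0<..<T} s * norm (d s)) * B) * indicator {0<..<T} t)"
        unfolding \<Psi>_def by (auto simp: fun_eq_iff)
      ultimately show "integrable lborel (\<lambda>t. case (s,t) of (s,t) \<Rightarrow> \<Psi> s t)" by simp
    qed
  qed
  have Phi_int: "integrable (lborel \<Otimes>\<^sub>M lborel) (\<lambda>(s,t). \<Phi> s t)"
  proof (rule Bochner_Integration.integrable_bound[OF Psi_int Phi_meas])
    show "AE x in lborel \<Otimes>\<^sub>M lborel. norm (case x of (s,t) \<Rightarrow> \<Phi> s t) \<le> norm (case x of (s,t) \<Rightarrow> \<Psi> s t)"
    proof (rule AE_I2, clarify)
      fix s t
      show "norm (\<Phi> s t) \<le> norm (\<Psi> s t)"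
      proof (cases "0 < s \<and> s < T \<and> s < t \<and> t < T")
        case True
        then have "\<bar>F t\<bar> \<le> B" using B by auto
        then show ?thesis using True unfolding \<Phi>_def \<Psi>_def
          by (auto simp: norm_mult intro!: mult_left_mono)
      qed (auto simp: \<Phi>_def)
    qed
  qed
  have inner_t: "(\<integral>t. \<Phi> s t \<partial>lborel) = indicator {0<..<T} s *\<^sub>R (d s * of_real (LINT t:{s<..<T}|lborel. F t))" for s
  proof -
    have "(\<lambda>t. \<Phi> s t) = (\<lambda>t. indicator {0<..<T} s *\<^sub>R (d s * (indicator {s<..<T} t *\<^sub>R complex_of_real (F t))))"
      unfolding \<Phi>_def by (auto split: split_indicator)
    then have "(\<integral>t. \<Phi> s t \<partial>lborel) = (\<integral>t. indicator {0<..<T} s *\<^sub>R (d s * (indicator {s<..<T} t *\<^sub>R complex_of_real (F t))) \<partial>lborel)"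
      by (simp only:)
    also have "\<dots> = indicator {0<..<T} s *\<^sub>R (\<integral>t. d s * (indicator {s<..<T} t *\<^sub>R complex_of_real (F t)) \<partial>lborel)"
      by (rule integral_scaleR_right)
    also have "\<dots> = indicator {0<..<T} s *\<^sub>R (d s * (LINT t:{s<..<T}|lborel. complex_of_real (F t)))"
      unfolding set_lebesgue_integral_def by (subst integral_mult_right_zero) (rule refl)
    finally have "(\<integral>t. \<Phi> s t \<partial>lborel) = indicator {0<..<T} s *\<^sub>R (d s * (LINT t:{s<..<T}|lborel. complex_of_real (F t)))" .
    then show ?thesis by (simp add: set_integral_complex_of_real)
  qed
  have inner_s: "(\<integral>s. \<Phi> s t \<partial>lborel) = indicator {0<..<T} t *\<^sub>R ((LINT s:{0<..<t}|lborel. d s) * of_real (F t))" for t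
  proof -
    have "(\<lambda>s. \<Phi> s t) = (\<lambda>s. indicator {0<..<T} t *\<^sub>R ((indicator {0<..<t} s *\<^sub>R d s) * complex_of_real (F t)))"
      unfolding \<Phi>_def by (auto split: split_indicator)
    then have "(\<integral>s. \<Phi> s t \<partial>lborel) = (\<integral>s. indicator {0<..<T} t *\<^sub>R ((indicator {0<..<t} s *\<^sub>R d s) * complex_of_real (F t)) \<partial>lborel)"
      by (simp only:)
    also have "\<dots> = indicator {0<..<T} t *\<^sub>R (\<integral>s. (indicator {0<..<t} s *\<^sub>R d s) * complex_of_real (F t) \<partial>lborel)"
      by (rule integral_scaleR_right)
    also have "\<dots> = indicator {0<..<T} t *\<^sub>R ((LINT s:{0<..<t}|lborel. d s) * of_real (F t))"
      unfolding set_lebesgue_integral_def by (subst integral_mult_left_zero) (rule refl)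
    finally show ?thesis .
  qed
  have I1: "integrable lborel (\<lambda>s. \<integral>t. \<Phi> s t \<partial>lborel)"
    using lborel_pair.integrable_fst[OF Phi_int] .
  have I2: "integrable lborel (\<lambda>t. \<integral>s. \<Phi> s t \<partial>lborel)"
    using lborel_pair.integrable_snd[OF Phi_int] .
  show "set_integrable lborel {0<..<T} (\<lambda>t. (LINT s:{0<..<t}|lborel. d s) * of_real (F t))"
    using I2 unfolding inner_s set_integrable_def .
  show "set_integrable lborel {0<..<T} (\<lambda>s. d s * of_real (LINT t:{s<..<T}|lborel. F t))"
    using I1 unfolding inner_t set_integrable_def .
  show "(LINT t:{0<..<T}|lborel. (LINT s:{0<..<t}|lborel. d s) * of_real (F t)) =
        (LINT s:{0<..<T}|lborel. d s * of_real (LINT t:{s<..<T}|lborel. F t))"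
    using lborel_pair.Fubini_integral[OF Phi_int] unfolding inner_s inner_t set_lebesgue_integral_def .
qed

lemma set_int_norm:
  fixes f :: "'a \<Rightarrow> 'b::{banach, second_countable_topology}"
  assumes "set_integrable M A f"
  shows "set_integrable M A (\<lambda>x. norm (f x))"
proof -
  have "integrable M (\<lambda>x. norm (indicator A x *\<^sub>R f x))"
    using assms unfolding set_integrable_def by (rule integrable_norm)
  moreover have "(\<lambda>x. norm (indicator A x *\<^sub>R f x)) = (\<lambda>x. indicator A x *\<^sub>R norm (f x))"
    by (auto split: split_indicator)
  ultimately show ?thesis unfolding set_integrable_def by simp
qed

lemma set_int_dom:
  fixes f g :: "real \<Rightarrow> real"
  assumes "set_integrable lborel A g" "f \<in> borel_measurable lborel" "A \<in> sets lborel"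
    "\<And>x. x \<in> A \<Longrightarrow> \<bar>f x\<bar> \<le> g x"
  shows "set_integrable lborel A f"
proof (rule set_integrable_bound[OF assms(1)])
  show "set_borel_measurable lborel A f"
    unfolding set_borel_measurable_def using assms(2,3) by measurable
  show "AE x in lborel. x \<in> A \<longrightarrow> norm (f x) \<le> norm (g x)"
    using assms(4) by (auto intro!: AE_I2) (smt (verit))
qed

lemma const_int: "set_integrable lborel {a<..<b::real} (\<lambda>_. c::real)"
  unfolding set_integrable_def
  by (rule integrable_scaleR_left) (rule integrable_real_indicator, auto)

lemma const_integral: "a \<le> b \<Longrightarrow> (LINT x:{a<..<b::real}|lborel. (c::real)) = (b - a) * c"
  by (subst set_integral_const) auto

lemma sub_interval_int:
  fixes f :: "real \<Rightarrow> real"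
  assumes "set_integrable lborel {0<..<T} f" "\<And>x. x \<in> {0<..<T} \<Longrightarrow> 0 \<le> f x" "t \<le> T"
  shows "(LINT x:{0<..<t}|lborel. f x) \<le> (LINT x:{0<..<T}|lborel. f x)"
proof -
  have "(LINT x:{0<..<t}|lborel. f x) = (LINT x:{0<..<T}|lborel. indicator {0<..<t} x * f x)"
    unfolding set_lebesgue_integral_def using assms(3)
    by (intro Bochner_Integration.integral_cong) (auto split: split_indicator)
  also have "\<dots> \<le> (LINT x:{0<..<T}|lborel. f x)"
  proof (rule set_integral_mono)
    show "set_integrable lborel {0<..<T} (\<lambda>x. indicator {0<..<t} x * f x)"
      unfolding set_integrable_def
    proof (rule Bochner_Integration.integrable_bound)
      show "integrable lborel (\<lambda>x. indicator {0<..<T} x *\<^sub>R f x)"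
        using assms(1) unfolding set_integrable_def .
      have "(\<lambda>x. indicator {0<..<T} x *\<^sub>R f x) \<in> borel_measurable lborel"
        using assms(1) unfolding set_integrable_def by (rule borel_measurable_integrable)
      then have "(\<lambda>x. indicator {0<..<t} x * (indicator {0<..<T} x *\<^sub>R f x)) \<in> borel_measurable lborel"
        by measurable
      moreover have "(\<lambda>x. indicator {0<..<t} x * (indicator {0<..<T} x *\<^sub>R f x)) = (\<lambda>x. indicator {0<..<T} x *\<^sub>R (indicator {0<..<t} x * f x))"
        by (auto split: split_indicator)
      ultimately show "(\<lambda>x. indicator {0<..<T} x *\<^sub>R (indicator {0<..<t} x * f x)) \<in> borel_measurable lborel" by simp
    qed (auto split: split_indicator)
  qed (use assms in \<open>auto split: split_indicator\<close>)
  finally show ?thesis .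
qed

lemma core:
  fixes T \<delta> A :: real and g d :: "real \<Rightarrow> complex" and F Kb w :: "real \<Rightarrow> real"
  assumes T1: "T \<ge> 1" and H1: "H1_deriv T g d"
    and wb: "\<And>t. t \<in> {0<..<T} \<Longrightarrow> 1 - \<delta> \<le> w t \<and> w t \<le> 1 + \<delta>"
    and \<delta>0: "0 \<le> \<delta>" and \<delta>1: "\<delta> \<le> 1/100"
    and w_cont: "continuous_on UNIV w"
    and F_cont: "continuous_on UNIV F" and F_nn: "\<And>t. t \<in> {0<..<T} \<Longrightarrow> 0 \<le> F t"
    and orth: "(LINT t:{0<..<T}|lborel. g t * of_real (F t)) = 0"
    and A_def: "A = (LINT t:{0<..<T}|lborel. F t)" and A_pos: "A > 0"
    and Kb_cont: "continuous_on UNIV Kb"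
    and Kb: "\<And>s. s \<in> {0<..<T} \<Longrightarrow> (LINT t:{s<..<T}|lborel. F t) \<le> Kb s"
    and gam: "(LINT s:{0<..<T}|lborel. (Kb s)^2) \<le> 3/4 * A^2"
  shows "(LINT t:{0<..<T}|lborel. (cmod (d t))^2 * w t) - (cmod (g 0))^2
           \<ge> 1/(25*T^2) * (LINT t:{0<..<T}|lborel. (cmod (g t))^2 * w t)"
proof -
  have d_meas[measurable]: "d \<in> borel_measurable lborel"
    using H1 unfolding H1_deriv_def by blast
  have d_int: "set_integrable lborel {0<..<T} d"
    using H1 unfolding H1_deriv_def by blast
  have d2_int: "set_integrable lborel {0<..<T} (\<lambda>t. (cmod (d t))^2)"
    using H1 unfolding H1_deriv_def by blast
  have g_eq: "\<And>t. t \<in> {0..T} \<Longrightarrow> g t = g 0 + (LINT s:{0<..<t}|lborel. d s)"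
    using H1 unfolding H1_deriv_def by blast
  have w_meas[measurable]: "w \<in> borel_measurable lborel"
    using borel_measurable_continuous_onI[OF w_cont] by simp
  have Kb_meas[measurable]: "Kb \<in> borel_measurable lborel"
    using borel_measurable_continuous_onI[OF Kb_cont] by simp
  define G where "G t = (LINT s:{0<..<t}|lborel. d s)" for t
  define K where "K s = (LINT t:{s<..<T}|lborel. F t)" for s
  define D where "D = (LINT t:{0<..<T}|lborel. (cmod (d t))^2)"
  have D0: "0 \<le> D" unfolding D_def by (rule set_nonneg) auto
  note fub = fubini_tri[OF d_meas d_int F_cont]
  have F_int: "set_integrable lborel {0<..<T} F"
    by (rule cont_set_integrable[of 0 T]) (auto intro: continuous_on_subset[OF F_cont])
  have K_nn: "0 \<le> K s" if "s \<in> {0<..<T}" for s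
    unfolding K_def by (rule set_nonneg) (use that F_nn in auto)
  have split: "g t * of_real (F t) = g 0 * of_real (F t) + G t * of_real (F t)" if "t \<in> {0<..<T}" for t
    using g_eq[of t] that unfolding G_def by (auto simp: algebra_simps)
  have "0 = (LINT t:{0<..<T}|lborel. g 0 * of_real (F t) + G t * of_real (F t))"
  proof -
    have "(LINT t:{0<..<T}|lborel. g t * of_real (F t)) = (LINT t:{0<..<T}|lborel. g 0 * of_real (F t) + G t * of_real (F t))"
      by (rule set_lebesgue_integral_cong) (auto simp only: split sets_lborel borel_open open_greaterThanLessThan)
    then show ?thesis using orth by simp
  qed
  also have "\<dots> = g 0 * of_real A + (LINT t:{0<..<T}|lborel. G t * of_real (F t))"
  proof -
    have i1: "set_integrable lborel {0<..<T} (\<lambda>t. g 0 * complex_of_real (F t))"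
    proof (rule set_integrable_mult_right)
      show "set_integrable lborel {0<..<T} (\<lambda>t. complex_of_real (F t))"
        proof -
        have "integrable lborel (\<lambda>t. complex_of_real (indicator {0<..<T} t *\<^sub>R F t))"
          using F_int unfolding set_integrable_def by (rule integrable_of_real)
        moreover have "(\<lambda>t. complex_of_real (indicator {0<..<T} t *\<^sub>R F t)) = (\<lambda>t. indicator {0<..<T} t *\<^sub>R complex_of_real (F t))"
          by (auto split: split_indicator)
        ultimately show ?thesis unfolding set_integrable_def by simp
      qed
    qed
    show ?thesis
      using i1 fub(1) unfolding G_def
      by (simp add: set_integral_add set_integral_complex_of_real A_def)
  qed
  also have "(LINT t:{0<..<T}|lborel. G t * of_real (F t)) = (LINT s:{0<..<T}|lborel. d s * of_real (K s))"
    unfolding G_def K_def by (rule fub(3))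
  finally have g0eq: "g 0 * of_real A = - (LINT s:{0<..<T}|lborel. d s * of_real (K s))"
    by (simp add: eq_neg_iff_add_eq_0)
  obtain BK where BK: "\<And>t. t \<in> {0..T} \<Longrightarrow> \<bar>Kb t\<bar> \<le> BK"
  proof -
    have "compact (Kb ` {0..T})"
      by (rule compact_continuous_image) (rule continuous_on_subset[OF Kb_cont], simp, rule compact_Icc)
    then have "bounded (Kb ` {0..T})" by (rule compact_imp_bounded)
    then obtain B where B0: "\<forall>y\<in>Kb ` {0..T}. norm y \<le> B" unfolding bounded_iff by (elim exE)
    show ?thesis
    proof (rule that[of B])
      fix t :: real assume "t \<in> {0..T}"
      then have "norm (Kb t) \<le> B" using B0 by (intro bspec[OF B0] imageI)
      then show "\<bar>Kb t\<bar> \<le> B" by (simp only: real_norm_def)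
    qed
  qed
  have int_dKb: "set_integrable lborel {0<..<T} (\<lambda>s. cmod (d s) * Kb s)"
  proof (rule set_int_dom)
    show "set_integrable lborel {0<..<T} (\<lambda>s. BK * cmod (d s))"
      using set_int_norm[OF d_int] by (rule set_integrable_mult_right)
    fix x assume "x \<in> {0<..<T}"
    then have "\<bar>Kb x\<bar> \<le> BK" using BK by auto
    then show "\<bar>cmod (d x) * Kb x\<bar> \<le> BK * cmod (d x)"
      by (simp add: abs_mult mult.commute[of BK] mult_left_mono)
  qed auto
  have "cmod (g 0) * A = cmod (g 0 * of_real A)"
    using A_pos by (simp add: norm_mult)
  also have "\<dots> = cmod (LINT s:{0<..<T}|lborel. d s * of_real (K s))"
    by (simp only: g0eq norm_minus_cancel)
  also have "\<dots> \<le> (LINT s:{0<..<T}|lborel. cmod (d s * of_real (K s)))"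
    by (rule set_norm_bound)
  also have "\<dots> \<le> (LINT s:{0<..<T}|lborel. cmod (d s) * Kb s)"
  proof (rule set_integral_mono)
    show "set_integrable lborel {0<..<T} (\<lambda>s. cmod (d s * complex_of_real (K s)))"
      using set_int_norm[OF fub(2)] unfolding K_def .
    show "set_integrable lborel {0<..<T} (\<lambda>s. cmod (d s) * Kb s)" by (rule int_dKb)
    fix s assume s: "s \<in> {0<..<T}"
    show "cmod (d s * complex_of_real (K s)) \<le> cmod (d s) * Kb s"
      using K_nn[OF s] Kb[OF s] unfolding K_def
      by (simp add: norm_mult mult_left_mono)
  qed
  finally have g0A: "cmod (g 0) * A \<le> (LINT s:{0<..<T}|lborel. cmod (d s) * Kb s)" .
  have "(LINT s:{0<..<T}|lborel. cmod (d s) * Kb s)^2 \<le> D * (LINT s:{0<..<T}|lborel. (Kb s)^2)"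
    unfolding D_def
  proof (rule cs_set)
    show "set_integrable lborel {0<..<T} (\<lambda>x. (Kb x)\<^sup>2)"
      by (rule cont_set_integrable[of 0 T]) (auto intro!: continuous_intros intro: continuous_on_subset[OF Kb_cont])
  qed (use d2_int int_dKb in auto)
  also have "\<dots> \<le> D * (3/4 * A^2)"
    by (rule mult_left_mono[OF gam D0])
  finally have I2: "(LINT s:{0<..<T}|lborel. cmod (d s) * Kb s)^2 \<le> D * (3/4 * A^2)" .
  have "(cmod (g 0) * A)^2 \<le> (LINT s:{0<..<T}|lborel. cmod (d s) * Kb s)^2"
    using g0A A_pos by (intro power_mono) auto
  with I2 have "(cmod (g 0))^2 * A^2 \<le> (3/4 * D) * A^2"
    by (simp add: power_mult_distrib algebra_simps)
  then have g0b: "(cmod (g 0))^2 \<le> 3/4 * D"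
    using A_pos by simp
  have int_dw: "set_integrable lborel {0<..<T} (\<lambda>t. (cmod (d t))^2 * w t)"
  proof (rule set_int_dom)
    show "set_integrable lborel {0<..<T} (\<lambda>t. (1+\<delta>) * (cmod (d t))^2)"
      using d2_int by (rule set_integrable_mult_right)
    fix x assume x: "x \<in> {0<..<T}"
    then have "0 \<le> w x" "w x \<le> 1 + \<delta>" using wb[OF x] \<delta>1 by auto
    then have "(cmod (d x))^2 * w x \<le> (cmod (d x))^2 * (1+\<delta>)" by (intro mult_left_mono) auto
    then show "\<bar>(cmod (d x))^2 * w x\<bar> \<le> (1+\<delta>) * (cmod (d x))^2"
      using \<open>0 \<le> w x\<close> by (simp add: abs_mult mult.commute)
  qed auto
  have dw: "(1-\<delta>) * D \<le> (LINT t:{0<..<T}|lborel. (cmod (d t))^2 * w t)"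
  proof -
    have "(1-\<delta>) * D = (LINT t:{0<..<T}|lborel. (1-\<delta>) * (cmod (d t))^2)"
      unfolding D_def by simp
    also have "\<dots> \<le> (LINT t:{0<..<T}|lborel. (cmod (d t))^2 * w t)"
    proof (rule set_integral_mono)
      show "set_integrable lborel {0<..<T} (\<lambda>t. (1-\<delta>) * (cmod (d t))^2)"
        using d2_int by (rule set_integrable_mult_right)
      fix x assume x: "x \<in> {0<..<T}"
      then have "1 - \<delta> \<le> w x" using wb[OF x] by auto
      then show "(1-\<delta>) * (cmod (d x))^2 \<le> (cmod (d x))^2 * w x"
        by (metis mult.commute mult_right_mono zero_le_power2)
    qed (rule int_dw)
    finally show ?thesis .
  qed
  have gb: "(cmod (g t))^2 * w t \<le> 4 * D * T * (1+\<delta>)" if t: "t \<in> {0<..<T}" for t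
  proof -
    have sub: "{0<..<t} \<subseteq> {0<..<T}" using t by auto
    have Gb1: "cmod (G t) \<le> (LINT s:{0<..<t}|lborel. cmod (d s) * 1)"
      unfolding G_def using set_norm_bound[where A="{0<..<t}" and M=lborel and f=d] by simp
    have "(LINT s:{0<..<t}|lborel. cmod (d s) * 1)^2 \<le> (LINT s:{0<..<t}|lborel. (cmod (d s))^2) * (LINT s:{0<..<t}|lborel. 1^2)"
    proof (rule cs_set)
      show "set_integrable lborel {0<..<t} (\<lambda>x. (cmod (d x))\<^sup>2)"
        by (rule set_integrable_subset[OF d2_int]) (use sub in auto)
      show "set_integrable lborel {0<..<t} (\<lambda>x. (1::real)^2)" by (simp add: const_int)
      show "set_integrable lborel {0<..<t} (\<lambda>x. cmod (d x) * 1)"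
        using set_integrable_subset[OF set_int_norm[OF d_int], of "{0<..<t}"] sub by auto
    qed
    also have "\<dots> \<le> D * t"
    proof (rule mult_mono)
      show "(LINT s:{0<..<t}|lborel. (cmod (d s))^2) \<le> D"
        unfolding D_def by (rule sub_interval_int[OF d2_int]) (use t in auto)
      show "(LINT s:{0<..<t}|lborel. (1::real)^2) \<le> t" using t by (simp add: const_integral)
    qed (use D0 t in \<open>auto simp: const_integral\<close>)
    finally have "(cmod (G t))^2 \<le> D * t"
      using Gb1 by (smt (verit) norm_ge_zero power_mono)
    also have "\<dots> \<le> D * T" using t D0 by (intro mult_left_mono) auto
    finally have Gb: "(cmod (G t))^2 \<le> D * T" .
    have "cmod (g t) \<le> cmod (g 0) + cmod (G t)"
      using g_eq[of t] t unfolding G_def by (auto intro: norm_triangle_ineq)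
    then have "(cmod (g t))^2 \<le> (cmod (g 0) + cmod (G t))^2"
      by (intro power_mono) auto
    also have "\<dots> \<le> 2 * (cmod (g 0))^2 + 2 * (cmod (G t))^2"
      by (smt (verit) sum_squares_ge_zero power2_sum zero_le_power2 power2_diff)
    also have "\<dots> \<le> 4 * D * T"
    proof -
      have "4 * D * T = 4 * (D * T)" by simp
      moreover have "D \<le> D * T" using mult_left_mono[OF T1 D0] by simp
      ultimately have "D \<le> D * T" by simp
      have "2 * (cmod (g 0))^2 + 2 * (cmod (G t))^2 \<le> 2*(3/4*D) + 2*(D*T)" using g0b Gb by linarith
      also have "\<dots> \<le> 4*(D*T)" using \<open>D \<le> D * T\<close> D0 by linarith
      also have "\<dots> = 4*D*T" by simp
      finally show ?thesis .
    qed
    finally have g2: "(cmod (g t))^2 \<le> 4 * D * T" .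
    have "0 \<le> w t" "w t \<le> 1 + \<delta>" using wb[OF t] \<delta>1 by auto
    then show ?thesis using g2 D0 T1
      by (smt (verit) mult_mono zero_le_power2)
  qed
  have gw: "(LINT t:{0<..<T}|lborel. (cmod (g t))^2 * w t) \<le> T * (4 * D * T * (1+\<delta>))"
  proof -
    have "(LINT t:{0<..<T}|lborel. (cmod (g t))^2 * w t) \<le> (LINT t:{0<..<T}|lborel. 4 * D * T * (1+\<delta>))"
      by (rule set_mono') (use gb const_int D0 \<delta>0 T1 in auto)
    also have "\<dots> = T * (4 * D * T * (1+\<delta>))" using T1 by (simp add: const_integral)
    finally show ?thesis .
  qed
  have "1/(25*T^2) * (LINT t:{0<..<T}|lborel. (cmod (g t))^2 * w t) \<le> 1/(25*T^2) * (T * (4 * D * T * (1+\<delta>)))"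
    using gw T1 by (intro mult_left_mono) auto
  also have "\<dots> = 4 * D * (1+\<delta>) / 25" using T1 by (simp add: power2_eq_square field_simps)
  also have "\<dots> \<le> (1-\<delta>) * D - 3/4 * D" 
  proof -
    have h: "\<delta> * D \<le> D/100" using mult_right_mono[OF \<delta>1 D0] by simp
    have e1: "4 * D * (1+\<delta>) / 25 = 4/25*D + 4/25*(\<delta>*D)" by (simp add: algebra_simps)
    have e2: "(1-\<delta>) * D - 3/4 * D = 1/4*D - \<delta>*D" by (simp add: algebra_simps)
    show ?thesis unfolding e1 e2 using h D0 by linarith
  qed
  also have "\<dots> \<le> (LINT t:{0<..<T}|lborel. (cmod (d t))^2 * w t) - (cmod (g 0))^2"
    using dw g0b by linarith
  finally show ?thesis .
qed

lemma exp_sq: "(exp (- (19/20)* s))^2 = exp (- (19/10)*(s::real))"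
proof -
  have "(exp (- (19/20)* s))^2 = exp (- (19/20)* s) * exp (- (19/20)* s)" by (simp add: power2_eq_square)
  also have "\<dots> = exp (- (19/20)* s + -(19/20)* s)" by (rule exp_add[symmetric])
  also have "\<dots> = exp (- (19/10)* s)" by simp
  finally show ?thesis .
qed

lemma main_fixed:
  fixes T \<delta> h \<beta> :: real and chi :: "real \<Rightarrow> real" and g d :: "real \<Rightarrow> complex"
  assumes T200: "T \<ge> 200" and \<delta>0: "0 \<le> \<delta>" and \<delta>1: "\<delta> \<le> 1/100" and hpos: "h > 0"
    and bh: "\<beta>^2 * h \<le> 1/200"
    and wtb: "\<And>t. t \<in> {0<..<T} \<Longrightarrow> \<bar>sqrt h * \<beta> * t\<bar> \<le> \<delta>"
    and chi_cont: "continuous_on UNIV chi" and chi01: "\<forall>x. 0 \<le> chi x \<and> chi x \<le> 1"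
    and chi1: "\<forall>x\<in>{-1/2..1/2}. chi x = 1"
    and H1: "H1_deriv T g d"
    and orth: "(LINT t:{0<..<T}|lborel. g t * of_real (chi (t/T) * uapp h \<beta> t * wt h \<beta> t)) = 0"
  shows "(LINT t:{0<..<T}|lborel. (cmod (d t))^2 * wt h \<beta> t) - (cmod (g 0))^2
          \<ge> 1/(25*T^2) * (LINT t:{0<..<T}|lborel. (cmod (g t))^2 * wt h \<beta> t)"
proof -
  define F where "F t = chi (t/T) * uapp h \<beta> t * wt h \<beta> t" for t
  define q where "q = \<beta>^2 * h"
  have q0: "0 \<le> q" unfolding q_def using hpos by simp
  have q1: "q \<le> 1/200" unfolding q_def using bh .
  have chiT: "continuous_on UNIV (\<lambda>t. chi (t/T))"
    by (rule continuous_on_compose2[OF chi_cont]) (use T200 in \<open>auto intro!: continuous_intros\<close>)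
  have F_cont: "continuous_on UNIV F"
    unfolding F_def uapp_def wt_def by (intro continuous_intros chiT) auto
  have w_cont: "continuous_on UNIV (wt h \<beta>)"
    unfolding wt_def by (intro continuous_intros)
  have wb: "1 - \<delta> \<le> wt h \<beta> t \<and> wt h \<beta> t \<le> 1 + \<delta>" if "t \<in> {0<..<T}" for t
    using wtb[OF that] unfolding wt_def by (auto simp: abs_le_iff)
  have ua_eq: "uapp h \<beta> t = (1 + q*t^2/4 - q/8) * (sqrt 2 * exp (-t))" for t
    unfolding uapp_def q_def by (simp add: algebra_simps)
  have ua_lo: "(1599/1600) * (sqrt 2 * exp (-t)) \<le> uapp h \<beta> t" if "0 \<le> t" for t
  proof -
    have "0 \<le> q*t^2/4" using q0 by simp
    then have "1599/1600 \<le> 1 + q*t^2/4 - q/8" using q1 by linarith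
    then show ?thesis unfolding ua_eq by (intro mult_right_mono) auto
  qed
  have ua_hi: "uapp h \<beta> t \<le> sqrt 2 * exp (- (19/20)*t)" if "0 \<le> t" for t
  proof -
    have "q * t^2 \<le> (1/200) * t^2" using q1 by (intro mult_right_mono) auto
    then have "1 + q*t^2/4 - q/8 \<le> 1 + t/20 + (t/20)^2/2" using q0 that by (simp add: power2_eq_square)
    also have "\<dots> \<le> exp (t/20)" using that by (intro exp_lower_Taylor_quadratic) simp
    finally have "(1 + q*t^2/4 - q/8) * (sqrt 2 * exp (-t)) \<le> exp (t/20) * (sqrt 2 * exp (-t))"
      by (intro mult_right_mono) auto
    also have "\<dots> = sqrt 2 * (exp (t/20) * exp (-t))" by simp
    also have "exp (t/20) * exp (-t) = exp (- (19/20)*t)" by (simp add: exp_add[symmetric])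
    finally show ?thesis unfolding ua_eq .
  qed
  have ua_nn: "0 \<le> uapp h \<beta> t" if "0 \<le> t" for t
  proof -
    have "0 \<le> (1599/1600) * (sqrt 2 * exp (-t))" by simp
    then show ?thesis using ua_lo[OF that] by linarith
  qed
  have F_nn: "0 \<le> F t" if t: "t \<in> {0<..<T}" for t
  proof -
    have "0 \<le> chi (t/T)" using chi01 by blast
    moreover have "0 \<le> uapp h \<beta> t" using t by (intro ua_nn) simp
    moreover have "0 \<le> wt h \<beta> t" using wb[OF t] \<delta>1 by linarith
    ultimately show ?thesis unfolding F_def by (intro mult_nonneg_nonneg)
  qed
  have F_hi: "F t \<le> (1+\<delta>) * (sqrt 2 * exp (- (19/20)*t))" if t: "t \<in> {0<..<T}" for t
  proof -
    have c: "0 \<le> chi (t/T)" "chi (t/T) \<le> 1" using chi01 by auto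
    have u: "0 \<le> uapp h \<beta> t" "uapp h \<beta> t \<le> sqrt 2 * exp (- (19/20)*t)" using ua_nn ua_hi t by auto
    have w: "0 \<le> wt h \<beta> t" "wt h \<beta> t \<le> 1 + \<delta>" using wb[OF t] \<delta>1 by auto
    have "chi (t/T) * uapp h \<beta> t \<le> 1 * uapp h \<beta> t"
      by (rule mult_right_mono) (use c u in auto)
    then have a: "chi (t/T) * uapp h \<beta> t \<le> sqrt 2 * exp (- (19/20)*t)" using u by linarith
    have "chi (t/T) * uapp h \<beta> t * wt h \<beta> t \<le> (sqrt 2 * exp (- (19/20)*t)) * (1+\<delta>)"
      by (rule mult_mono[OF a w(2)]) (use w in auto)
    then show ?thesis unfolding F_def by (simp add: mult.commute)
  qed
  have F_lo: "(1-\<delta>) * ((1599/1600) * (sqrt 2 * exp (-t))) \<le> F t" if t: "t \<in> {0<..<T/2}" for t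
  proof -
    have tT: "t \<in> {0<..<T}" using t by auto
    have "t/T \<le> 1/2" using t T200 by (simp add: divide_le_eq)
    moreover have "0 \<le> t/T" using t T200 by simp
    ultimately have "t/T \<in> {-1/2..1/2}" by simp
    then have c: "chi (t/T) = 1" using chi1 by auto
    have "(1599/1600) * (sqrt 2 * exp (-t)) * (1-\<delta>) \<le> uapp h \<beta> t * wt h \<beta> t"
      using ua_lo[of t] wb[OF tT] t \<delta>1 ua_nn[of t] by (intro mult_mono) auto
    then show ?thesis unfolding F_def c by (simp add: mult.commute)
  qed
  have F_int: "set_integrable lborel {0<..<T} F"
    by (rule cont_set_integrable[of 0 T]) (auto intro: continuous_on_subset[OF F_cont])
  define A where "A = (LINT t:{0<..<T}|lborel. F t)"
  have eT: "exp (- (T/2)) \<le> 1/100"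
  proof -
    have "101 \<le> 1 + T/2" using T200 by simp
    also have "\<dots> \<le> exp (T/2)" by (rule exp_ge_add_one_self)
    finally have "101 \<le> exp (T/2)" .
    have "exp (- (T/2)) = 1 / exp (T/2)" by (simp add: exp_minus inverse_eq_divide)
    also have "\<dots> \<le> 1/101" by (rule divide_left_mono) (use \<open>101 \<le> exp (T/2)\<close> in auto)
    also have "\<dots> \<le> 1/100" by simp
    finally show ?thesis .
  qed
  have A_lo: "(1-\<delta>) * (1599/1600) * sqrt 2 * (1 - exp (- (T/2))) \<le> A"
  proof -
    have "(1-\<delta>) * (1599/1600) * sqrt 2 * (1 - exp (- (T/2))) = (1-\<delta>) * (1599/1600) * sqrt 2 * (LINT t:{0<..<T/2}|lborel. exp (- 1 * t))"
      using exp_int[of 1 0 "T/2"] T200 by simp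
    also have "\<dots> = (LINT t:{0<..<T/2}|lborel. (1-\<delta>) * ((1599/1600) * (sqrt 2 * exp (-t))))"
      by (simp add: mult.assoc)
    also have "\<dots> \<le> (LINT t:{0<..<T/2}|lborel. F t)"
    proof (rule set_integral_mono)
      show "set_integrable lborel {0<..<T/2} (\<lambda>t. (1-\<delta>) * ((1599/1600) * (sqrt 2 * exp (-t))))"
        by (rule cont_set_integrable[of 0 "T/2"]) (auto intro!: continuous_intros)
      show "set_integrable lborel {0<..<T/2} F"
        by (rule cont_set_integrable[of 0 "T/2"]) (auto intro: continuous_on_subset[OF F_cont])
    qed (rule F_lo)
    also have "\<dots> \<le> A" unfolding A_def
      by (rule sub_interval_int[OF F_int F_nn]) (use T200 in auto)
    finally show ?thesis .
  qed
  have A_lo2: "sqrt 2 * (95/100) \<le> A"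
  proof -
    have "(99/100) * (1599/1600) * (99/100) \<le> (1-\<delta>) * (1599/1600) * (1 - exp (- (T/2)))"
      using \<delta>1 eT by (intro mult_mono) auto
    then have P: "95/100 \<le> (1-\<delta>) * (1599/1600) * (1 - exp (- (T/2)))" by linarith
    have "sqrt 2 * (95/100) \<le> sqrt 2 * ((1-\<delta>) * (1599/1600) * (1 - exp (- (T/2))))"
      by (rule mult_left_mono[OF P]) simp
    also have "\<dots> = (1-\<delta>) * (1599/1600) * sqrt 2 * (1 - exp (- (T/2)))" by (simp add: algebra_simps)
    also have "\<dots> \<le> A" by (rule A_lo)
    finally show ?thesis .
  qed
  have "0 < sqrt 2 * (95/100)" by simp
  then have A_pos: "A > 0" using A_lo2 by linarith
  define C where "C = (1+\<delta>) * sqrt 2 * (20/19)"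
  define Kb where "Kb s = C * exp (- (19/20)* s)" for s
  have Kb_cont: "continuous_on UNIV Kb" unfolding Kb_def by (intro continuous_intros)
  have Kb_b: "(LINT t:{s<..<T}|lborel. F t) \<le> Kb s" if s: "s \<in> {0<..<T}" for s
  proof -
    have "(LINT t:{s<..<T}|lborel. F t) \<le> (LINT t:{s<..<T}|lborel. (1+\<delta>) * (sqrt 2 * exp (- (19/20)*t)))"
    proof (rule set_integral_mono)
      show "set_integrable lborel {s<..<T} F"
        by (rule cont_set_integrable[of s T]) (auto intro: continuous_on_subset[OF F_cont])
      show "set_integrable lborel {s<..<T} (\<lambda>t. (1+\<delta>) * (sqrt 2 * exp (- (19/20)*t)))"
        by (rule cont_set_integrable[of s T]) (auto intro!: continuous_intros)
    qed (use F_hi s in auto)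
    also have "\<dots> = (1+\<delta>) * sqrt 2 * (LINT t:{s<..<T}|lborel. exp (- (19/20)*t))"
      by (simp add: mult.assoc)
    also have "\<dots> = (1+\<delta>) * sqrt 2 * ((exp (- (19/20)* s) - exp (- (19/20)*T)) / (19/20))"
      using exp_int[of "19/20" s T] s by simp
    also have "\<dots> \<le> (1+\<delta>) * sqrt 2 * (exp (- (19/20)* s) / (19/20))"
      using \<delta>0 by (intro mult_left_mono divide_right_mono) auto
    also have "\<dots> = Kb s" unfolding Kb_def C_def by simp
    finally show ?thesis .
  qed
  have Kb_sq: "(LINT s:{0<..<T}|lborel. (Kb s)^2) \<le> C^2 * (10/19)"
  proof -
    have "(LINT s:{0<..<T}|lborel. (Kb s)^2) = (LINT s:{0<..<T}|lborel. C^2 * exp (- (19/10)* s))"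
      unfolding Kb_def power_mult_distrib exp_sq by (rule refl)
    also have "\<dots> = C^2 * ((exp (- (19/10)*0) - exp (- (19/10)*T)) / (19/10))"
      using exp_int[of "19/10" 0 T] T200 by simp
    also have "\<dots> \<le> C^2 * (1 / (19/10))"
      by (intro mult_left_mono divide_right_mono) auto
    finally show ?thesis by simp
  qed
  have gam: "(LINT s:{0<..<T}|lborel. (Kb s)^2) \<le> 3/4 * A^2"
  proof -
    have d2: "(1+\<delta>)^2 \<le> (101/100)^2" using \<delta>0 \<delta>1 by (intro power_mono) auto
    have "C^2 = (1+\<delta>)^2 * (sqrt 2)^2 * (20/19)^2" unfolding C_def by (simp only: power_mult_distrib)
    then have "C^2 = (1+\<delta>)^2 * 2 * (400/361)" by (simp add: power2_eq_square)
    then have "C^2 * (10/19) = (1+\<delta>)^2 * (8000/6859)" by simp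
    also have "\<dots> \<le> (101/100)^2 * (8000/6859)" using d2 by simp
    also have "\<dots> \<le> 3/4 * (2 * (95/100)^2)" by (simp add: power2_eq_square)
    also have "3/4 * (2 * (95/100)^2) = 3/4 * (sqrt 2 * (95/100))^2" by (simp only: power_mult_distrib real_sqrt_pow2 zero_le_numeral)
    also have "\<dots> \<le> 3/4 * A^2" using A_lo2 by (intro mult_left_mono power_mono) auto
    finally show ?thesis using Kb_sq by linarith
  qed
  have orth': "(LINT t:{0<..<T}|lborel. g t * of_real (F t)) = 0"
    using orth unfolding F_def .
  show ?thesis
    by (rule core[OF _ H1 wb \<delta>0 \<delta>1 w_cont F_cont F_nn orth' A_def A_pos Kb_cont Kb_b gam]) (use T200 in auto)
qed

lemma ua_lo_lem:
  assumes hpos: "h > 0" and bh: "\<beta>^2 * h \<le> 1/200" and t: "0 \<le> t"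
  shows "(1599/1600) * (sqrt 2 * exp (-t)) \<le> uapp h \<beta> t"
proof -
  define q where "q = \<beta>^2 * h"
  have q0: "0 \<le> q" unfolding q_def using hpos by simp
  have q1: "q \<le> 1/200" unfolding q_def using bh .
  have ua_eq: "uapp h \<beta> t = (1 + q*t^2/4 - q/8) * (sqrt 2 * exp (-t))"
    unfolding uapp_def q_def by (simp add: algebra_simps)
  have "0 \<le> q*t^2/4" using q0 by simp
  then have "1599/1600 \<le> 1 + q*t^2/4 - q/8" using q1 by linarith
  then show ?thesis unfolding ua_eq by (intro mult_right_mono) auto
qed

lemma w0_pos:
  fixes T \<delta> h \<beta> :: real and chi :: "real \<Rightarrow> real"
  assumes T200: "T \<ge> 200" and \<delta>0: "0 \<le> \<delta>" and \<delta>1: "\<delta> \<le> 1/100" and hpos: "h > 0"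
    and bh: "\<beta>^2 * h \<le> 1/200"
    and wtb: "\<And>t. t \<in> {0<..<T} \<Longrightarrow> \<bar>sqrt h * \<beta> * t\<bar> \<le> \<delta>"
    and chi_cont: "continuous_on UNIV chi" and chi01: "\<forall>x. 0 \<le> chi x \<and> chi x \<le> 1"
    and chi1: "\<forall>x\<in>{-1/2..1/2}. chi x = 1"
  shows "0 < (LINT t:{0<..<T}|lborel. (chi (t/T) * uapp h \<beta> t)^2 * wt h \<beta> t)"
proof -
  define P where "P t = (chi (t/T) * uapp h \<beta> t)^2 * wt h \<beta> t" for t
  have chiT: "continuous_on UNIV (\<lambda>t. chi (t/T))"
    by (rule continuous_on_compose2[OF chi_cont]) (use T200 in \<open>auto intro!: continuous_intros\<close>)
  have P_cont: "continuous_on UNIV P"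
    unfolding P_def uapp_def wt_def by (intro continuous_intros chiT) auto
  have wb: "1 - \<delta> \<le> wt h \<beta> t \<and> wt h \<beta> t \<le> 1 + \<delta>" if "t \<in> {0<..<T}" for t
    using wtb[OF that] unfolding wt_def by (auto simp: abs_le_iff)
  have P_nn: "0 \<le> P t" if t: "t \<in> {0<..<T}" for t
  proof -
    have "0 \<le> wt h \<beta> t" using wb[OF t] \<delta>1 by linarith
    then show ?thesis unfolding P_def by simp
  qed
  have P_lo: "exp (- 2 * t) \<le> P t" if t: "t \<in> {0<..<T/2}" for t
  proof -
    have tT: "t \<in> {0<..<T}" using t by auto
    have "t/T \<le> 1/2" using t T200 by (simp add: divide_le_eq)
    moreover have "0 \<le> t/T" using t T200 by simp
    ultimately have "t/T \<in> {-1/2..1/2}" by simp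
    then have c: "chi (t/T) = 1" using chi1 by auto
    define a where "a = (1599/1600) * (sqrt 2 * exp (-t))"
    have a0: "0 \<le> a" unfolding a_def by simp
    have au: "a \<le> uapp h \<beta> t" unfolding a_def using t by (intro ua_lo_lem hpos bh) simp
    have "a^2 \<le> (uapp h \<beta> t)^2" using a0 au by (intro power_mono)
    moreover have w: "99/100 \<le> wt h \<beta> t" using wb[OF tT] \<delta>1 by linarith
    ultimately have "a^2 * (99/100) \<le> (uapp h \<beta> t)^2 * wt h \<beta> t"
      by (rule mult_mono) auto
    moreover have "a^2 = (1599/1600)^2 * 2 * exp (- 2 * t)"
    proof -
      have "a^2 = (1599/1600)^2 * (sqrt 2)^2 * (exp (-t))^2" unfolding a_def by (simp only: power_mult_distrib)
      moreover have "(exp (-t))^2 = exp (- 2 * t)"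
        by (simp add: power2_eq_square exp_add[symmetric])
      ultimately show ?thesis by simp
    qed
    ultimately have "(1599/1600)^2 * 2 * (99/100) * exp (- 2 * t) \<le> P t"
      unfolding P_def c by (simp add: mult_ac)
    moreover have "1 \<le> (1599/1600)^2 * 2 * (99/100::real)" by (simp add: power2_eq_square)
    moreover have "1 * exp (- 2 * t) \<le> (1599/1600)^2 * 2 * (99/100) * exp (- 2 * t)"
      by (rule mult_right_mono) (use calculation in auto)
    ultimately show ?thesis by linarith
  qed
  have "0 < (1 - exp (- 2 * (T/2))) / 2"
    using T200 by simp
  also have "(1 - exp (- 2 * (T/2))) / 2 = (LINT t:{0<..<T/2}|lborel. exp (- 2 * t))"
    using exp_int[of 2 0 "T/2"] T200 by simp
  also have "\<dots> \<le> (LINT t:{0<..<T/2}|lborel. P t)"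
  proof (rule set_integral_mono)
    show "set_integrable lborel {0<..<T/2} (\<lambda>t. exp (- 2 * t))"
      by (rule cont_set_integrable[of 0 "T/2"]) (auto intro!: continuous_intros)
    show "set_integrable lborel {0<..<T/2} P"
      by (rule cont_set_integrable[of 0 "T/2"]) (auto intro: continuous_on_subset[OF P_cont])
  qed (rule P_lo)
  also have "\<dots> \<le> (LINT t:{0<..<T}|lborel. P t)"
  proof -
    have P_int: "set_integrable lborel {0<..<T} P"
      by (rule cont_set_integrable[of 0 T]) (auto intro: continuous_on_subset[OF P_cont])
    show ?thesis by (rule sub_interval_int[OF P_int P_nn]) (use T200 in auto)
  qed
  finally show ?thesis unfolding P_def .
qed

theorem lemma4p3:
  fixes \<rho> M \<beta> :: real and chi :: "real \<Rightarrow> real"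
  assumes "1/3 < \<rho>" "\<rho> < 1/2" "M > 0" "\<beta> \<in> {-M..M}"
    and "smooth_real chi" "\<forall>x. 0 \<le> chi x \<and> chi x \<le> 1"
    and "tsupp chi \<subseteq> {-1<..<1}" "\<forall>x\<in>{-1/2..1/2}. chi x = 1"
  shows "\<exists>m h0. m > 0 \<and> h0 > 0 \<and>
    (\<forall>h g dg. 0 < h \<and> h \<le> h0 \<and> H1_deriv (Th \<rho> h) g dg \<and>
        ip \<rho> h \<beta> g (vh \<rho> chi h \<beta>) = 0 \<longrightarrow>
        (nrm \<rho> h \<beta> dg)^2 - (cmod (g 0))^2 \<ge> m * h powr (1 - 2*\<rho>) * (nrm \<rho> h \<beta> g)^2)"
proof -
  note \<rho>1 = assms(1) and \<rho>2 = assms(2) and M0 = assms(3) and \<beta>M = assms(4)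
  note chi01 = assms(6) and chi1 = assms(8)
  have chi_cont: "continuous_on UNIV chi"
  proof -
    obtain D :: "nat \<Rightarrow> real \<Rightarrow> real" where D0: "D 0 = chi"
      and Dd: "\<forall>n x. (D n has_real_derivative D (Suc n) x) (at x)"
      using assms(5) unfolding smooth_real_def by blast
    have "isCont chi x" for x
      using Dd D0 by (metis DERIV_isCont)
    then show ?thesis by (simp add: continuous_at_imp_continuous_on)
  qed
  have \<beta>2: "\<beta>^2 \<le> M^2"
  proof -
    have "\<bar>\<beta>\<bar> \<le> M" using \<beta>M by auto
    then have "\<bar>\<beta>\<bar>^2 \<le> M^2" by (intro power_mono) auto
    then show ?thesis by simp
  qed
  define e where "e = \<rho> - 1/2"
  have e0: "e < 0" unfolding e_def using \<rho>2 by simp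
  define h1 where "h1 = 200 powr (1/e)"
  define h2 where "h2 = (1/(100*M)) powr (1/\<rho>)"
  define h3 where "h3 = 1/(200*M^2)"
  define h0 where "h0 = min h1 (min h2 h3)"
  have h0pos: "h0 > 0" unfolding h0_def h1_def h2_def h3_def using M0 by simp
  have main: "(nrm \<rho> h \<beta> dg)^2 - (cmod (g 0))^2 \<ge> 1/25 * h powr (1 - 2*\<rho>) * (nrm \<rho> h \<beta> g)^2"
    if h: "0 < h" "h \<le> h0" and H1: "H1_deriv (Th \<rho> h) g dg" and orth: "ip \<rho> h \<beta> g (vh \<rho> chi h \<beta>) = 0"
    for h g dg
  proof -
    define T where "T = Th \<rho> h"
    have T_eq: "T = h powr e" unfolding T_def Th_def e_def by simp
    have T200: "T \<ge> 200"
    proof -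
      have "h1 powr e \<le> h powr e" using h e0 unfolding h0_def by (intro powr_mono2') auto
      moreover have "h1 powr e = 200" unfolding h1_def using e0 by (simp add: powr_powr)
      ultimately show ?thesis unfolding T_eq by simp
    qed
    define \<delta> where "\<delta> = M * h powr \<rho>"
    have \<delta>0: "0 \<le> \<delta>" unfolding \<delta>_def using M0 by simp
    have \<delta>1: "\<delta> \<le> 1/100"
    proof -
      have "h powr \<rho> \<le> h2 powr \<rho>" using h \<rho>1 unfolding h0_def by (intro powr_mono2) auto
      also have "h2 powr \<rho> = 1/(100*M)" unfolding h2_def using \<rho>1 M0 by (simp add: powr_powr)
      finally have "M * h powr \<rho> \<le> M * (1/(100*M))" using M0 by (intro mult_left_mono) auto
      then show ?thesis unfolding \<delta>_def using M0 by simp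
    qed
    have bh: "\<beta>^2 * h \<le> 1/200"
    proof -
      have "\<beta>^2 * h \<le> M^2 * h" using \<beta>2 h by (intro mult_right_mono) auto
      also have "\<dots> \<le> M^2 * h3" using h unfolding h0_def by (intro mult_left_mono) auto
      also have "\<dots> = 1/200" unfolding h3_def using M0 by simp
      finally show ?thesis .
    qed
    have sT: "sqrt h * T = h powr \<rho>"
    proof -
      have "sqrt h * T = h powr (1/2) * h powr e" using h unfolding T_eq by (simp add: powr_half_sqrt)
      also have "\<dots> = h powr (1/2 + e)" by (simp add: powr_add)
      also have "1/2 + e = \<rho>" unfolding e_def by simp
      finally show ?thesis .
    qed
    have wtb: "\<bar>sqrt h * \<beta> * t\<bar> \<le> \<delta>" if t: "t \<in> {0<..<T}" for t
    proof -
      have "\<bar>sqrt h * \<beta> * t\<bar> = sqrt h * (\<bar>\<beta>\<bar> * t)" using t h by (simp add: abs_mult)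
      also have "\<dots> \<le> sqrt h * (M * T)"
        using t \<beta>M h by (intro mult_left_mono mult_mono) auto
      also have "\<dots> = M * (sqrt h * T)" by simp
      also have "\<dots> = \<delta>" unfolding sT \<delta>_def ..
      finally show ?thesis .
    qed
    have wt_nn: "0 \<le> wt h \<beta> t" if "t \<in> {0<..<T}" for t
      using wtb[OF that] \<delta>1 unfolding wt_def by (auto simp: abs_le_iff)
    have ipw0: "ip \<rho> h \<beta> (w0 \<rho> chi h \<beta>) (w0 \<rho> chi h \<beta>) =
        of_real (LINT t:{0<..<T}|lborel. (chi (t/T) * uapp h \<beta> t)^2 * wt h \<beta> t)"
      unfolding ip_def w0_def T_def
      by (simp add: set_integral_complex_of_real[symmetric] power2_eq_square)
    have pos: "0 < (LINT t:{0<..<T}|lborel. (chi (t/T) * uapp h \<beta> t)^2 * wt h \<beta> t)"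
      by (rule w0_pos[OF T200 \<delta>0 \<delta>1 h(1) bh wtb chi_cont chi01 chi1])
    have ch0: "ch \<rho> chi h \<beta> \<noteq> 0"
      unfolding ch_def nrm_def ipw0 using pos by simp
    have "ip \<rho> h \<beta> g (vh \<rho> chi h \<beta>) = of_real (ch \<rho> chi h \<beta>) *
        (LINT t:{0<..<T}|lborel. g t * of_real (chi (t/T) * uapp h \<beta> t * wt h \<beta> t))"
      unfolding ip_def vh_def w0_def T_def
      by (simp add: set_integral_mult_right[symmetric] mult_ac)
    then have orth': "(LINT t:{0<..<T}|lborel. g t * of_real (chi (t/T) * uapp h \<beta> t * wt h \<beta> t)) = 0"
      using orth ch0 by simp
    have H1': "H1_deriv T g dg" using H1 unfolding T_def .
    have key: "(LINT t:{0<..<T}|lborel. (cmod (dg t))^2 * wt h \<beta> t) - (cmod (g 0))^2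
          \<ge> 1/(25*T^2) * (LINT t:{0<..<T}|lborel. (cmod (g t))^2 * wt h \<beta> t)"
      by (rule main_fixed[OF T200 \<delta>0 \<delta>1 h(1) bh wtb chi_cont chi01 chi1 H1' orth'])
    have nrm_sq: "(nrm \<rho> h \<beta> u)^2 = (LINT t:{0<..<T}|lborel. (cmod (u t))^2 * wt h \<beta> t)" for u
    proof -
      have "ip \<rho> h \<beta> u u = of_real (LINT t:{0<..<T}|lborel. (cmod (u t))^2 * wt h \<beta> t)"
      proof -
        have "\<And>t. u t * cnj (u t) * complex_of_real (wt h \<beta> t) = complex_of_real ((cmod (u t))^2 * wt h \<beta> t)"
          by (simp only: of_real_mult complex_norm_square)
        then show ?thesis unfolding ip_def T_def
          by (simp only: set_integral_complex_of_real[symmetric])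
      qed
      moreover have "0 \<le> (LINT t:{0<..<T}|lborel. (cmod (u t))^2 * wt h \<beta> t)"
        by (rule set_nonneg) (use wt_nn in auto)
      ultimately show ?thesis unfolding nrm_def by simp
    qed
    have hp: "h powr (1 - 2*\<rho>) = 1/T^2"
    proof -
      have "T^2 = h powr e * h powr e" unfolding T_eq by (simp add: power2_eq_square)
      also have "\<dots> = h powr (e + e)" by (rule powr_add[symmetric])
      finally have "1/T^2 = h powr (- (e + e))" by (simp add: powr_minus_divide)
      also have "- (e + e) = 1 - 2*\<rho>" unfolding e_def by simp
      finally show ?thesis by simp
    qed
    show ?thesis using key unfolding nrm_sq hp by simp
  qed
  show ?thesis
    by (rule exI[of _ "1/25"], rule exI[of _ h0]) (use h0pos main in auto)
qed

end
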